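(* Let $B_2$ be the closed unit ball of a real Hilbert space (or $\mathbb{R}^d$ with the Euclidean norm), let $R(w)=-\log(1-\|w\|^2)$ for $\|w\|<1$, let $x_1,\dots,x_n\in B_2$ and $y_1,\dots,y_n\in\{0,1\}$ be arbitrary, and let $$g_t(w)=-\mathbf{1}\{y_t=1\}\log(1+\langle w,x_t\rangle)-\mathbf{1}\{y_t=0\}\log(1-\langle w,x_t\rangle).$$ Let $\eta>0$ and let $w_1,w_2,\dots$ be the Follow-the-Regularized-Leader iterates $w_{t+1}=\arg\min_{w\in B_2}\sum_{s=1}^t\langle\nabla g_s(w_s),w\rangle+\eta^{-1}R(w)$ (with $w_1=\arg\min R=0$). Then for every $t$, $$\|\nabla g_t(w_t)\|^*_{w_t}\le3,$$ where for $w$ in the open unit ball, $\|h\|^*_w=\sqrt{h^{\top}(\nabla^2R(w))^{-1}h}$ is the local dual norm. *)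

theory Defs
  imports "HOL-Analysis.Analysis"
begin

definition Rreg :: "'a::real_inner \<Rightarrow> real" where
  "Rreg w = - ln (1 - (norm w)^2)"

definition grad :: "('a::real_inner \<Rightarrow> real) \<Rightarrow> 'a \<Rightarrow> 'a" where
  "grad f w = (THE G. (f has_derivative (\<lambda>h. G \<bullet> h)) (at w))"

definition hess :: "('a::real_inner \<Rightarrow> real) \<Rightarrow> 'a \<Rightarrow> 'a \<Rightarrow> 'a" where
  "hess f w = frechet_derivative (grad f) (at w)"

definition local_dual_norm :: "'a::real_inner \<Rightarrow> 'a \<Rightarrow> real" where
  "local_dual_norm w h = sqrt (h \<bullet> (inv (hess Rreg w) h))"

definition logloss :: "'a::real_inner \<Rightarrow> nat \<Rightarrow> 'a \<Rightarrow> real" where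
  "logloss x y w = - (if y = 1 then ln (1 + w \<bullet> x) else 0)
                   - (if y = 0 then ln (1 - w \<bullet> x) else 0)"

end

theory Submission imports Defs begin

lemma grad_eqI:
  assumes "(f has_derivative (\<lambda>h. G \<bullet> h)) (at w)"
  shows "grad f w = G"
  unfolding grad_def
proof (rule the_equality)
  show "(f has_derivative (\<lambda>h. G \<bullet> h)) (at w)" by (rule assms)
  fix G' assume "(f has_derivative (\<lambda>h. G' \<bullet> h)) (at w)"
  from has_derivative_unique[OF this assms] have "\<And>h. G' \<bullet> h = G \<bullet> h" by metis
  from this[of "G' - G"] have "(G' - G) \<bullet> (G' - G) = 0" by (simp add: inner_diff_left)
  then show "G' = G" by simp
qed

lemma grad_ll1:
  fixes x w :: "'a::real_inner"
  assumes "1 + w \<bullet> x > 0"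
  shows "grad (logloss x 1) w = (- 1 / (1 + w \<bullet> x)) *\<^sub>R x"
proof -
  have e: "logloss x 1 = (\<lambda>v. - ln (1 + v \<bullet> x))" by (auto simp: logloss_def)
  have g: "((\<lambda>v. 1 + v \<bullet> x) has_derivative (\<lambda>h. 0 + h \<bullet> x)) (at w)"
    by (intro has_derivative_add has_derivative_const has_derivative_inner_left has_derivative_ident)
  have "((\<lambda>v. - ln (1 + v \<bullet> x)) has_derivative (\<lambda>h. - ((0 + h \<bullet> x) * inverse (1 + w \<bullet> x)))) (at w)"
    by (intro has_derivative_minus DERIV_compose_FDERIV[OF DERIV_ln g] assms)
  then have "((\<lambda>v. - ln (1 + v \<bullet> x)) has_derivative (\<lambda>h. ((- 1 / (1 + w \<bullet> x)) *\<^sub>R x) \<bullet> h)) (at w)"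
    by (rule has_derivative_eq_rhs) (auto simp: inner_commute field_simps fun_eq_iff)
  then show ?thesis unfolding e by (rule grad_eqI)
qed

lemma grad_ll0:
  fixes x w :: "'a::real_inner"
  assumes "1 - w \<bullet> x > 0"
  shows "grad (logloss x 0) w = (1 / (1 - w \<bullet> x)) *\<^sub>R x"
proof -
  have e: "logloss x 0 = (\<lambda>v. - ln (1 - v \<bullet> x))" by (auto simp: logloss_def)
  have g: "((\<lambda>v. 1 - v \<bullet> x) has_derivative (\<lambda>h. 0 - h \<bullet> x)) (at w)"
    by (intro has_derivative_diff has_derivative_const has_derivative_inner_left has_derivative_ident)
  have "((\<lambda>v. - ln (1 - v \<bullet> x)) has_derivative (\<lambda>h. - ((0 - h \<bullet> x) * inverse (1 - w \<bullet> x)))) (at w)"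
    by (intro has_derivative_minus DERIV_compose_FDERIV[OF DERIV_ln g] assms)
  then have "((\<lambda>v. - ln (1 - v \<bullet> x)) has_derivative (\<lambda>h. ((1 / (1 - w \<bullet> x)) *\<^sub>R x) \<bullet> h)) (at w)"
    by (rule has_derivative_eq_rhs) (auto simp: inner_commute field_simps fun_eq_iff)
  then show ?thesis unfolding e by (rule grad_eqI)
qed

lemma grad_R:
  fixes w :: "'a::real_inner"
  assumes "norm w < 1"
  shows "grad Rreg w = (2 / (1 - norm w ^ 2)) *\<^sub>R w"
proof -
  have e: "Rreg = (\<lambda>v. - ln (1 - v \<bullet> v))" by (auto simp: Rreg_def power2_norm_eq_inner fun_eq_iff)
  have p: "0 < 1 - w \<bullet> w" using assms
    by (simp add: abs_square_less_1 flip: power2_norm_eq_inner)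
  have g: "((\<lambda>v. 1 - v \<bullet> v) has_derivative (\<lambda>h. 0 - (w \<bullet> h + h \<bullet> w))) (at w)"
    by (intro has_derivative_diff has_derivative_const has_derivative_inner has_derivative_ident)
  have "((\<lambda>v. - ln (1 - v \<bullet> v)) has_derivative (\<lambda>h. - ((0 - (w \<bullet> h + h \<bullet> w)) * inverse (1 - w \<bullet> w)))) (at w)"
    by (intro has_derivative_minus DERIV_compose_FDERIV[OF DERIV_ln g] p)
  then have "((\<lambda>v. - ln (1 - v \<bullet> v)) has_derivative (\<lambda>h. ((2 / (1 - w \<bullet> w)) *\<^sub>R w) \<bullet> h)) (at w)"
    by (rule has_derivative_eq_rhs) (auto simp: inner_commute field_simps fun_eq_iff)
  then show ?thesis unfolding e by (simp add: grad_eqI power2_norm_eq_inner)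
qed

lemma hess_R:
  fixes w :: "'a::real_inner"
  assumes "norm w < 1"
  shows "hess Rreg w = (\<lambda>h. (2 / (1 - norm w ^ 2)) *\<^sub>R h + (4 * (w \<bullet> h) / (1 - norm w ^ 2)^2) *\<^sub>R w)"
proof -
  have "norm w ^ 2 < 1" using assms by (simp add: abs_square_less_1)
  then have p: "1 - w \<bullet> w \<noteq> 0" by (simp flip: power2_norm_eq_inner)
  have g: "((\<lambda>v. 1 - v \<bullet> v) has_derivative (\<lambda>h. 0 - (w \<bullet> h + h \<bullet> w))) (at w)"
    by (intro has_derivative_diff has_derivative_const has_derivative_inner has_derivative_ident)
  have f: "((\<lambda>v. 2 / (1 - v \<bullet> v)) has_derivative
     (\<lambda>h. - 2 * (inverse (1 - w \<bullet> w) * (0 - (w \<bullet> h + h \<bullet> w)) * inverse (1 - w \<bullet> w)) + 0 / (1 - w \<bullet> w))) (at w)"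
    by (rule has_derivative_divide[OF has_derivative_const g p])
  have F: "((\<lambda>v. (2 / (1 - v \<bullet> v)) *\<^sub>R v) has_derivative
     (\<lambda>h. (2 / (1 - w \<bullet> w)) *\<^sub>R h + (- 2 * (inverse (1 - w \<bullet> w) * (0 - (w \<bullet> h + h \<bullet> w)) * inverse (1 - w \<bullet> w)) + 0 / (1 - w \<bullet> w)) *\<^sub>R w)) (at w)"
    by (rule has_derivative_scaleR[OF f has_derivative_ident])
  have F2: "((\<lambda>v. (2 / (1 - v \<bullet> v)) *\<^sub>R v) has_derivative
     (\<lambda>h. (2 / (1 - norm w ^ 2)) *\<^sub>R h + (4 * (w \<bullet> h) / (1 - norm w ^ 2)^2) *\<^sub>R w)) (at w)"
    unfolding power2_norm_eq_inner
    apply (rule has_derivative_eq_rhs[OF F])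
    using p by (auto simp: fun_eq_iff inner_commute field_simps power2_eq_square)
  have G: "((grad Rreg) has_derivative
     (\<lambda>h. (2 / (1 - norm w ^ 2)) *\<^sub>R h + (4 * (w \<bullet> h) / (1 - norm w ^ 2)^2) *\<^sub>R w)) (at w)"
    apply (rule has_derivative_transform_within_open[OF F2, of "ball 0 1"])
    using assms by (auto simp: grad_R power2_norm_eq_inner)
  show ?thesis unfolding hess_def by (rule frechet_derivative_at[OF G, symmetric])
qed

lemma alg1:
  fixes q A B :: real
  assumes "q < 1" "0 \<le> q" "2 / (1 - q) * A + 4 * A / (1 - q)^2 * q = B"
  shows "A = (1 - q)^2 / (2 * (1 + q)) * B"
proof -
  have n: "1 - q \<noteq> 0" "1 + q \<noteq> 0" "(1 - q)^2 \<noteq> 0" using assms by auto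
  have "B * (1 - q)^2 = (2 / (1 - q) * A) * (1 - q)^2 + (4 * A / (1 - q)^2 * q) * (1 - q)^2"
    unfolding assms(3)[symmetric] by (simp add: algebra_simps)
  also have "(4 * A / (1 - q)^2 * q) * (1 - q)^2 = 4 * A * q" using n by simp
  also have "(2 / (1 - q) * A) * (1 - q)^2 = 2 * (1 - q) * A" using n by (simp add: power2_eq_square)
  finally have "B * (1 - q)^2 = 2 * (1 + q) * A" by (simp add: algebra_simps)
  then show ?thesis using n by (simp add: field_simps)
qed
lemma alg2:
  fixes q A B C D :: real
  assumes "q < 1" "0 \<le> q" "2 / (1 - q) * C + 4 * A / (1 - q)^2 * B = D"
    and "A = (1 - q)^2 / (2 * (1 + q)) * B"
  shows "C = (1 - q) / 2 * (D - 2 * B^2 / (1 + q))"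
proof -
  have n: "1 - q \<noteq> 0" "1 + q \<noteq> 0" "(1 - q)^2 \<noteq> 0" using assms by auto
  have "4 * A / (1 - q)^2 * B = 2 * B^2 / (1 + q)"
  proof -
    have "2 + 2 * q \<noteq> 0" using assms by auto
    have a: "4 * A / (1 - q)^2 * B = 4 * (B * B) / (2 * (1 + q))" unfolding assms(4) using n by simp
    have b: "4 * (B * B) / (2 * (1 + q)) = 2 * (B * B) / (1 + q)"
      by (simp only: mult_divide_mult_cancel_left[of 2 "2 * (B * B)" "1 + q", symmetric])
    show ?thesis using a b by (simp add: power2_eq_square)
  qed
  with assms(3) have "2 / (1 - q) * C = D - 2 * B^2 / (1 + q)" by simp
  then show ?thesis using n by (simp add: field_simps)
qed

lemma inv_val:
  fixes w h :: "'a::real_inner"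
  assumes "norm w < 1"
  shows "h \<bullet> inv (hess Rreg w) h = (1 - w \<bullet> w) / 2 * (h \<bullet> h - 2 * (w \<bullet> h)^2 / (1 + w \<bullet> w))"
proof -
  define q where "q = w \<bullet> w"
  have "norm w ^ 2 < 1" using assms by (simp add: abs_square_less_1)
  then have q1: "q < 1" by (simp add: q_def flip: power2_norm_eq_inner)
  have q0: "q \<ge> 0" by (simp add: q_def)
  have qp: "1 + q \<noteq> 0" "1 - q \<noteq> 0" using q0 q1 by auto
  define H where "H = hess Rreg w"
  have H: "\<And>z. H z = (2 / (1 - q)) *\<^sub>R z + (4 * (w \<bullet> z) / (1 - q)^2) *\<^sub>R w"
    by (simp add: H_def hess_R[OF assms] q_def power2_norm_eq_inner)
  define z0 where "z0 = ((1 - q) / 2) *\<^sub>R (h - (2 * (w \<bullet> h) / (1 + q)) *\<^sub>R w)"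
  have wz0: "w \<bullet> z0 = ((1 - q)^2 / (2 * (1 + q))) * (w \<bullet> h)"
    using q1 q0 qp by (simp add: z0_def inner_diff_right q_def[symmetric] field_simps power2_eq_square)
  have "H z0 = (h - (2 * (w \<bullet> h) / (1 + q)) *\<^sub>R w) + (2 * (w \<bullet> h) / (1 + q)) *\<^sub>R w"
  proof -
    have "(2 / (1 - q)) *\<^sub>R z0 = h - (2 * (w \<bullet> h) / (1 + q)) *\<^sub>R w"
    proof -
      have "(2 / (1 - q)) * ((1 - q) / 2) = 1" using q1 by simp
      moreover have "(2 / (1 - q)) *\<^sub>R z0 = ((2 / (1 - q)) * ((1 - q) / 2)) *\<^sub>R (h - (2 * (w \<bullet> h) / (1 + q)) *\<^sub>R w)"
        by (simp only: z0_def scaleR_scaleR)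
      ultimately show ?thesis by (simp only: scaleR_one)
    qed
    moreover have "4 * (w \<bullet> z0) / (1 - q)^2 = 2 * (w \<bullet> h) / (1 + q)"
    proof -
      have gen: "\<And>c a. c \<noteq> 0 \<Longrightarrow> 4 * (c / (2 * (1 + q)) * a) / c = 2 * a / (1 + q)"
        using qp by (simp add: divide_simps)
      have "(1 - q)^2 \<noteq> 0" using q1 by simp
      from gen[OF this] show ?thesis by (simp add: wz0)
    qed
    ultimately show ?thesis by (simp add: H)
  qed
  then have "H z0 = h" by simp
  then have "h \<in> range H" by blast
  then have Hz: "H (inv H h) = h" by (rule f_inv_into_f)
  define z where "z = inv H h"
  have e: "(2 / (1 - q)) *\<^sub>R z + (4 * (w \<bullet> z) / (1 - q)^2) *\<^sub>R w = h"
    using Hz by (simp add: H z_def)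
  have "w \<bullet> ((2 / (1 - q)) *\<^sub>R z + (4 * (w \<bullet> z) / (1 - q)^2) *\<^sub>R w) = w \<bullet> h"
    by (simp add: e)
  then have "2 / (1 - q) * (w \<bullet> z) + 4 * (w \<bullet> z) / (1 - q)^2 * q = w \<bullet> h"
    by (simp add: inner_add_right q_def)
  then have wz: "w \<bullet> z = ((1 - q)^2 / (2 * (1 + q))) * (w \<bullet> h)"
    by (rule alg1[OF q1 q0])
  have "h \<bullet> ((2 / (1 - q)) *\<^sub>R z + (4 * (w \<bullet> z) / (1 - q)^2) *\<^sub>R w) = h \<bullet> h"
    by (simp add: e)
  then have "2 / (1 - q) * (h \<bullet> z) + 4 * (w \<bullet> z) / (1 - q)^2 * (w \<bullet> h) = h \<bullet> h"
    by (simp add: inner_add_right inner_commute)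
  then have "h \<bullet> z = (1 - q) / 2 * (h \<bullet> h - 2 * (w \<bullet> h)^2 / (1 + q))"
    by (rule alg2[OF q1 q0 _ wz])
  then show ?thesis by (simp add: z_def H_def q_def)
qed

lemma alg3:
  fixes q xx k u s :: real
  assumes q0: "0 \<le> q" and q1: "q < 1" and xx: "xx \<le> 1" and u: "u > 0"
    and ku: "(k * u)^2 = 1" and su: "s^2 = (u - 1)^2"
  shows "(1 - q) / 2 * (k^2 * xx - 2 * (k * s)^2 / (1 + q)) \<le> 9"
proof -
  define c where "c = 1 - q"
  have c0: "c > 0" using q1 by (simp add: c_def)
  have qc: "q = 1 - c" by (simp add: c_def)
  have id: "4 * u^2 - c * (1 + q - 2 * s^2) = (2 * u - c)^2 + 2 * c * u^2"
    unfolding su qc by (simp add: power2_eq_square algebra_simps)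
  have A: "c * (1 + q - 2 * s^2) \<le> 4 * u^2"
    using id c0 by (smt (verit) mult_nonneg_nonneg zero_le_power2)
  have k2: "k^2 \<ge> 0" by simp
  have "(1 - q) / 2 * (k^2 * xx - 2 * (k * s)^2 / (1 + q)) = k^2 * (c / 2 * xx - c * s^2 / (1 + q))"
  proof -
    have "1 + q \<noteq> 0" using q0 by auto
    then show ?thesis by (simp add: c_def power_mult_distrib field_simps)
  qed
  also have "\<dots> \<le> k^2 * (c / 2 - c * s^2 / (1 + q))"
    using c0 xx k2 by (intro mult_left_mono) auto
  also have "c / 2 - c * s^2 / (1 + q) = c * (1 + q - 2 * s^2) / (2 * (1 + q))"
    using q0 by (simp add: field_simps)
  also have "k^2 * (c * (1 + q - 2 * s^2) / (2 * (1 + q))) \<le> k^2 * (4 * u^2 / (2 * (1 + q)))"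
    using A q0 k2 by (intro mult_left_mono divide_right_mono) auto
  also have "k^2 * (4 * u^2 / (2 * (1 + q))) = 2 / (1 + q)"
  proof -
    have "k^2 * (4 * u^2 / (2 * (1 + q))) = 4 * (k^2 * u^2) / (2 * (1 + q))" by simp
    also have "\<dots> = 4 / (2 * (1 + q))" using ku by (simp add: power_mult_distrib)
    also have "\<dots> = 2 / (1 + q)" using q0 by (simp add: field_simps)
    finally show ?thesis .
  qed
  also have "\<dots> \<le> 9" using q0 by (simp add: field_simps)
  finally show ?thesis .
qed

lemma bound_one:
  fixes w x :: "'a::real_inner"
  assumes w: "norm w < 1" and x: "norm x \<le> 1" and y: "yy \<in> {0, 1::nat}"
  shows "local_dual_norm w (grad (logloss x yy) w) \<le> 3"
proof -
  define s where "s = w \<bullet> x"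
  have "\<bar>s\<bar> \<le> norm w * norm x" unfolding s_def by (rule Cauchy_Schwarz_ineq2)
  also have "\<dots> \<le> norm w * 1" using x by (intro mult_left_mono) auto
  finally have sa: "\<bar>s\<bar> < 1" using w by simp
  have q0: "0 \<le> w \<bullet> w" by simp
  have "norm w ^ 2 < 1" using w by (simp add: abs_square_less_1)
  then have q1: "w \<bullet> w < 1" by (simp flip: power2_norm_eq_inner)
  have "norm x ^ 2 \<le> 1" using x by (simp add: abs_square_le_1)
  then have xx: "x \<bullet> x \<le> 1" by (simp flip: power2_norm_eq_inner)
  have key: "h \<bullet> inv (hess Rreg w) h \<le> 9" if h: "h = k *\<^sub>R x" and ku: "(k * u)^2 = 1"
    and u: "u > 0" and su: "s^2 = (u - 1)^2" for h k u
  proof -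
    have "h \<bullet> inv (hess Rreg w) h = (1 - w \<bullet> w) / 2 * (h \<bullet> h - 2 * (w \<bullet> h)^2 / (1 + w \<bullet> w))"
      by (rule inv_val[OF w])
    also have "\<dots> = (1 - w \<bullet> w) / 2 * (k^2 * (x \<bullet> x) - 2 * (k * s)^2 / (1 + w \<bullet> w))"
      by (simp add: h s_def power2_eq_square)
    also have "\<dots> \<le> 9" by (rule alg3[OF q0 q1 xx u ku su])
    finally show ?thesis .
  qed
  have "grad (logloss x yy) w \<bullet> inv (hess Rreg w) (grad (logloss x yy) w) \<le> 9"
  proof (cases "yy = 1")
    case True
    have p: "1 + w \<bullet> x > 0" using sa by (simp add: s_def)
    show ?thesis unfolding True grad_ll1[OF p]
      by (rule key[of _ "- 1 / (1 + w \<bullet> x)" "1 + s"]) (use p in \<open>auto simp: s_def power2_eq_square field_simps\<close>)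
  next
    case False
    then have y0: "yy = 0" using y by auto
    have p: "1 - w \<bullet> x > 0" using sa by (simp add: s_def)
    show ?thesis unfolding y0 grad_ll0[OF p]
      by (rule key[of _ "1 / (1 - w \<bullet> x)" "1 - s"]) (use p in \<open>auto simp: s_def power2_eq_square field_simps\<close>)
  qed
  then have "local_dual_norm w (grad (logloss x yy) w) \<le> sqrt 9"
    unfolding local_dual_norm_def by (rule real_sqrt_le_mono)
  also have "sqrt 9 = (3::real)" by (simp add: real_sqrt_eq_iff) 
  finally show ?thesis .
qed

theorem lemma3:
  fixes x :: "nat \<Rightarrow> 'a::{real_inner, complete_space}"
    and y :: "nat \<Rightarrow> nat"
    and w :: "nat \<Rightarrow> 'a"
    and \<eta> :: real
    and n :: nat
  assumes eta: "\<eta> > 0"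
    and xs: "\<forall>t\<in>{1..n}. norm (x t) \<le> 1"
    and ys: "\<forall>t\<in>{1..n}. y t \<in> {0, 1}"
    and w1: "w 1 = 0"
    and ftrl: "\<forall>t\<in>{1..<n}. norm (w (t + 1)) < 1 \<and>
       (\<forall>v. norm v < 1 \<longrightarrow>
          (\<Sum>s=1..t. grad (logloss (x s) (y s)) (w s) \<bullet> w (t + 1)) + Rreg (w (t + 1)) / \<eta>
          \<le> (\<Sum>s=1..t. grad (logloss (x s) (y s)) (w s) \<bullet> v) + Rreg v / \<eta>)"
  shows "\<forall>t\<in>{1..n}. local_dual_norm (w t) (grad (logloss (x t) (y t)) (w t)) \<le> 3"
proof
  fix t assume t: "t \<in> {1..n}"
  have "norm (w t) < 1"
  proof (cases "t = 1")
    case True then show ?thesis using w1 by simp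
  next
    case False
    then have "t - 1 \<in> {1..<n}" using t by auto
    with ftrl have "norm (w (t - 1 + 1)) < 1" by blast
    then show ?thesis using False t by simp
  qed
  then show "local_dual_norm (w t) (grad (logloss (x t) (y t)) (w t)) \<le> 3"
    using xs ys t by (intro bound_one) auto
qed

end
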